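(* Let the polynomials $A_h(z)$, $h\ge 0$, be defined by $A_0(z)=z$, $A_1(z)=z^2$ and $A_{h+2}(z)=A_{h+1}(z)\bigl(A_{h+1}(z)+2A_h(z)\bigr)$ for all $h\ge 0$. For each $h$, let $\alpha_h$ be the unique positive real solution of $A_h(z)=1/3$. Let $a_n$ be the coefficient of $z^n$ in the formal power series $A(z)=\sum_{h\ge 0}A_h(z)$. Then the limit $\alpha=\lim_{h\to\infty}\alpha_h=0.5219\ldots$ exists, and \[\log_2(a_n)=n\log_2(\alpha^{-1})+\log\theta(n),\qquad n\log_2(\alpha^{-1})=n(0.938\ldots),\] for a function $\theta$ growing at most sub-exponentially, i.e. $\theta(n)=o(\kappa^n)$ for every $\kappa>1$.
   Context: $A_h(z)$ is the generating function of AVL trees of height $h$ (binary trees in which the subtrees of any node differ in height by at most one), with the conventions used by the recursion and initial conditions given; $A(z)$ is the generating function of all AVL trees and $a_n$ its counting sequence. Each $A_h$ is a non-constant polynomial with non-negative coefficients, so $A_h(z)=1/3$ has a unique positive solution. *)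

theory Defs
  imports "HOL-Computational_Algebra.Polynomial" "HOL-Library.Landau_Symbols"
begin

fun avlA :: "nat \<Rightarrow> real poly" where
  "avlA 0 = [:0, 1:]"
| "avlA (Suc 0) = [:0, 0, 1:]"
| "avlA (Suc (Suc h)) = avlA (Suc h) * (avlA (Suc h) + smult 2 (avlA h))"

definition avl_alpha :: "nat \<Rightarrow> real" where
  "avl_alpha h = (THE z. z > 0 \<and> poly (avlA h) z = 1/3)"

text \<open>a_n: coefficient of z^n in the formal power series A(z) = sum over h of A_h(z)
  (the coefficientwise sum; only finitely many h contribute for each n).\<close>
definition avl_a :: "nat \<Rightarrow> real" where
  "avl_a n = (\<Sum>h. coeff (avlA h) n)"

end

theory Submission imports Defs begin
abbreviation X :: "nat \<Rightarrow> real \<Rightarrow> real" where "X h z \<equiv> poly (avlA h) z"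

lemma X0: "X 0 z = z" by simp
lemma X1: "X 1 z = z^2" by (simp add: power2_eq_square)
lemma Xrec: "X (Suc (Suc h)) z = X (Suc h) z * (X (Suc h) z + 2 * X h z)" by simp
lemma Xrec2: "X (h+2) z = X (h+1) z * (X (h+1) z + 2 * X h z)"
  by (simp add: numeral_2_eq_2)

lemma X_pos: "0 < z \<Longrightarrow> 0 < X h z"
  by (induction h rule: avlA.induct) auto

lemma X_nonneg: "0 \<le> z \<Longrightarrow> 0 \<le> X h z"
  by (induction h rule: avlA.induct) auto

lemma X_mono_strict: "0 \<le> z1 \<Longrightarrow> z1 < z2 \<Longrightarrow> X h z1 < X h z2"
proof (induction h rule: avlA.induct)
  case 1 then show ?case by simp
next
  case 2 then show ?case by (simp add: mult_strict_mono)
next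
  case (3 h)
  have a: "X (Suc h) z1 < X (Suc h) z2" "X h z1 < X h z2" using 3 by auto
  have b: "0 \<le> X (Suc h) z1" "0 \<le> X h z1" using X_nonneg 3 by auto
  have "X (Suc h) z1 + 2 * X h z1 < X (Suc h) z2 + 2 * X h z2" using a by linarith
  then show ?case using a b by (simp add: mult_strict_mono)
qed

lemma X_mono: "0 \<le> z1 \<Longrightarrow> z1 \<le> z2 \<Longrightarrow> X h z1 \<le> X h z2"
  using X_mono_strict[of z1 z2 h] by (cases "z1 = z2") auto

lemma X_at0: "X h 0 = 0"
  by (induction h rule: avlA.induct) auto

lemma X_at1: "1 \<le> X h 1"
proof (induction h rule: avlA.induct)
  case (3 h)
  have "1 \<le> X (Suc h) 1" "0 \<le> X h 1" using 3 X_nonneg[of 1 h] by auto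
  then show ?case by (simp add: one_le_mult_iff) (smt (verit) mult_le_cancel_left1)
qed auto

lemma X_sq: "0 \<le> z \<Longrightarrow> (X h z)^2 \<le> X (Suc h) z"
proof (cases h)
  case 0 then show ?thesis by (simp add: power2_eq_square)
next
  case (Suc k)
  assume z: "0 \<le> z"
  have "0 \<le> X (Suc k) z" "0 \<le> X k z" using X_nonneg z by auto
  then show ?thesis using Suc by (simp add: power2_eq_square mult_left_mono)
qed

lemma coeff_nonneg: "0 \<le> coeff (avlA h) i"
proof (induction h arbitrary: i rule: avlA.induct)
  case 1 then show ?case by (cases i) (auto simp: coeff_pCons split: nat.splits)
next
  case 2 then show ?case by (auto simp: coeff_pCons split: nat.splits)
next
  case (3 h)
  then show ?case by (auto simp: coeff_mult intro!: sum_nonneg mult_nonneg_nonneg add_nonneg_nonneg)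
qed


lemma coeff_le_poly:
  assumes "\<And>i. 0 \<le> coeff p i" "0 \<le> (z::real)"
  shows "coeff p n * z^n \<le> poly p z"
proof (cases "n \<le> degree p")
  case True
  have "coeff p n * z^n \<le> (\<Sum>i\<le>degree p. coeff p i * z ^ i)"
    by (rule member_le_sum) (use True assms in auto)
  then show ?thesis by (simp add: poly_altdef)
next
  case False
  then have "coeff p n = 0" by (simp add: coeff_eq_0)
  moreover have "0 \<le> poly p z" unfolding poly_altdef using assms by (auto intro!: sum_nonneg)
  ultimately show ?thesis by simp
qed

lemma coeff_mult_pos:
  fixes p q :: "real poly"
  assumes "\<And>i. 0 \<le> coeff p i" "\<And>i. 0 \<le> coeff q i" "0 < coeff p a" "0 < coeff q b"
  shows "0 < coeff (p * q) (a + b)"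
proof -
  have "coeff p a * coeff q (a + b - a) \<le> (\<Sum>i\<le>a+b. coeff p i * coeff q (a + b - i))"
    by (rule member_le_sum) (use assms in auto)
  moreover have "0 < coeff p a * coeff q (a + b - a)" using assms by simp
  ultimately show ?thesis by (simp add: coeff_mult)
qed

lemma coeff_rec:
  "coeff (avlA (Suc (Suc h))) n = coeff (avlA (Suc h) * avlA (Suc h)) n + 2 * coeff (avlA (Suc h) * avlA h) n"
  by (simp add: distrib_left mult_smult_right)

lemma coeff_prod_nonneg: "0 \<le> coeff (avlA k * avlA j) n"
  by (auto simp: coeff_mult coeff_nonneg intro!: sum_nonneg)

definition lo :: "nat \<Rightarrow> nat" where "lo h = (if h = 0 then 1 else 2^(h-1) + 1)"

lemma lo_le: "lo h \<le> 2^h"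
proof (cases h)
  case (Suc k)
  have "1 \<le> (2::nat)^k" by simp
  then show ?thesis using Suc by (simp add: lo_def)
qed (simp add: lo_def)

lemma coeff_pos_range: "lo h \<le> n \<Longrightarrow> n \<le> 2^h \<Longrightarrow> 0 < coeff (avlA h) n"
proof (induction h arbitrary: n rule: avlA.induct)
  case 1 then show ?case by (simp add: lo_def)
next
  case 2 then have "n = 2" by (simp add: lo_def)
  then show ?case by (simp add: numeral_2_eq_2)
next
  case (3 h)
  show ?case
  proof (cases "n = 2^(h+1) + 1")
    case True
    define b where "b = lo h"
    define a where "a = n - b"
    have hb: "lo h \<le> b" "b \<le> 2^h" using lo_le[of h] by (auto simp: b_def)
    have ha0: "lo (Suc h) \<le> a \<and> a \<le> 2^(Suc h)"
    proof (cases h)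
      case 0 then show ?thesis using True by (simp add: a_def b_def lo_def)
    next
      case (Suc k)
      have e: "(2::nat)^(Suc (Suc k)) = 4 * 2^k" "(2::nat)^(Suc k) = 2*2^k" "1 \<le> (2::nat)^k" by simp_all
      have "a = 4 * 2^k + 1 - (2^k + 1)" using True Suc e by (simp add: a_def b_def lo_def)
      then show ?thesis using Suc e by (simp add: lo_def)
    qed
    then have ha: "lo (Suc h) \<le> a" "a \<le> 2^(Suc h)" by auto
    have nab: "n = a + b" using hb True unfolding a_def by (auto simp: lo_def)
    have "0 < coeff (avlA (Suc h) * avlA h) (a + b)"
      by (rule coeff_mult_pos) (use 3 ha hb coeff_nonneg in auto)
    then show ?thesis unfolding nab using coeff_prod_nonneg[of "Suc h" "Suc h" "a+b"] coeff_rec[of h "a+b"] by linarith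
  next
    case False
    define a where "a = n div 2"
    define b where "b = n - a"
    have n: "2^(h+1) + 2 \<le> n" "n \<le> 2 * 2^(h+1)" using False "3.prems" by (auto simp: lo_def)
    have ha: "lo (Suc h) \<le> a" "a \<le> 2^(Suc h)" using n by (auto simp: a_def lo_def)
    have hb: "lo (Suc h) \<le> b" "b \<le> 2^(Suc h)" using n by (auto simp: a_def b_def lo_def)
    have nab: "n = a + b" by (simp add: a_def b_def)
    have "0 < coeff (avlA (Suc h) * avlA (Suc h)) (a + b)"
      by (rule coeff_mult_pos) (use 3 ha hb coeff_nonneg in auto)
    then show ?thesis unfolding nab using coeff_prod_nonneg[of "Suc h" h "a+b"] coeff_rec[of h "a+b"] by linarith
  qed
qed

lemma coeff_pos_ex: "1 \<le> n \<Longrightarrow> \<exists>h. 0 < coeff (avlA h) n"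
proof (cases "n = 1")
  case True then show ?thesis by (intro exI[of _ 0]) simp
next
  case False
  assume "1 \<le> n"
  define h where "h = (LEAST h. n \<le> 2^h)"
  have ex: "n \<le> 2^n" using less_exp[of n] by simp
  have h1: "n \<le> 2^h" unfolding h_def by (rule LeastI[of _ n]) (rule ex)
  have "h \<noteq> 0"
  proof
    assume "h = 0" then have "n \<le> 1" using h1 by simp
    then show False using False \<open>1 \<le> n\<close> by simp
  qed
  then obtain k where k: "h = Suc k" by (cases h) auto
  have "\<not> n \<le> 2^k" using not_less_Least[of k "\<lambda>h. n \<le> 2^h"] k h_def by simp
  then have "lo h \<le> n" using k by (simp add: lo_def)
  then show ?thesis using h1 coeff_pos_range by blast
qed


lemma alpha_ex1: "\<exists>!z. z > 0 \<and> X h z = 1/3"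
proof -
  have "\<exists>z\<ge>0. z \<le> 1 \<and> X h z = 1/3"
    by (rule IVT) (use X_at0[of h] X_at1[of h] in auto)
  then obtain z where z: "0 \<le> z" "X h z = 1/3" by auto
  have "z \<noteq> 0" using z X_at0[of h] by auto
  with z have "z > 0 \<and> X h z = 1/3" by auto
  moreover have "w = z" if "w > 0 \<and> X h w = 1/3" for w
  proof (rule ccontr)
    assume "w \<noteq> z"
    then have "w < z \<or> z < w" by auto
    then show False using X_mono_strict[of w z h] X_mono_strict[of z w h] z that by auto
  qed
  ultimately show ?thesis by blast
qed

lemma alpha_prop: "avl_alpha h > 0" "X h (avl_alpha h) = 1/3"
  using theI'[OF alpha_ex1[of h]] unfolding avl_alpha_def by auto

lemma below_alpha: "0 \<le> z \<Longrightarrow> X h z < 1/3 \<Longrightarrow> z < avl_alpha h"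
  using X_mono[of "avl_alpha h" z h] alpha_prop[of h] by force

lemma above_alpha: "0 \<le> z \<Longrightarrow> X h z > 1/3 \<Longrightarrow> avl_alpha h < z"
  using X_mono[of z "avl_alpha h" h] alpha_prop[of h] by force

definition Sp :: "real \<Rightarrow> bool" where "Sp z = (\<exists>h. X h z < 1/3 \<and> X (Suc h) z < 1/3)"
definition Tp :: "real \<Rightarrow> bool" where "Tp z = (\<exists>h. X h z > 1/3 \<and> X (Suc h) z > 1/3)"

lemma S_decay:
  assumes z: "0 < z" and m: "X h z \<le> m" "X (Suc h) z \<le> m" "m \<le> 1/3"
  shows "X (h+k) z \<le> m \<and> X (h+k+1) z \<le> m * (3*m)^k"
proof (induction k)
  case 0 then show ?case using m by simp
next
  case (Suc k)
  have p: "0 < X (h+k) z" "0 < X (h+k+1) z" using X_pos z by auto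
  have m0: "0 \<le> m" using p(1) Suc by linarith
  have "(3*m)^k \<le> 1" using m0 m(3) by (intro power_le_one) auto
  then have "m * (3*m)^k \<le> m" using m0 by (simp add: mult_left_le)
  then have b: "X (h+k+1) z \<le> m" using Suc by linarith
  have "X (h+k+2) z = X (h+k+1) z * (X (h+k+1) z + 2 * X (h+k) z)"
    using Xrec2[of "h+k" z] by (simp add: add.assoc)
  also have "\<dots> \<le> X (h+k+1) z * (3 * m)"
  proof (rule mult_left_mono)
    show "X (h + k + 1) z + 2 * X (h + k) z \<le> 3 * m" using Suc b by linarith
  qed (use p in auto)
  also have "\<dots> \<le> m * (3*m)^k * (3 * m)"
    using Suc m0 by (intro mult_right_mono) auto
  finally show ?case using b by (simp add: add.assoc mult_ac)
qed

lemma S_forward: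
  assumes z: "0 < z" and h: "X h z < 1/3" "X (Suc h) z < 1/3"
  shows "\<forall>j\<ge>h. X j z < 1/3" "summable (\<lambda>j. X j z)"
proof -
  define m where "m = max (X h z) (X (Suc h) z)"
  have m: "X h z \<le> m" "X (Suc h) z \<le> m" "m < 1/3" using h by (auto simp: m_def)
  have m0: "0 \<le> m" using X_pos[OF z, of h] m by linarith
  note D = S_decay[OF z m(1,2) less_imp_le[OF m(3)]]
  show "\<forall>j\<ge>h. X j z < 1/3"
  proof (intro allI impI)
    fix j assume "h \<le> j"
    then obtain k where "j = h + k" using le_Suc_ex by blast
    then show "X j z < 1/3" using D[of k] m by auto
  qed
  have "summable (\<lambda>k. X (k + (h+1)) z)"
  proof (rule summable_comparison_test')
    show "summable (\<lambda>k. m * (3*m)^k)" using m0 m by (intro summable_mult summable_geometric) auto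
    show "norm (X (k + (h+1)) z) \<le> m * (3*m)^k" for k
      using D[of k] X_pos[OF z, of "k+(h+1)"] by (simp add: add.commute add.left_commute)
  qed
  then show "summable (\<lambda>j. X j z)" by (rule summable_iff_shift[THEN iffD1])
qed

lemma T_forward:
  assumes z: "0 < z" and h: "X h z > 1/3" "X (Suc h) z > 1/3"
  shows "\<forall>j\<ge>h. X j z > 1/3"
proof -
  have D: "X (h+k) z > 1/3 \<and> X (h+k+1) z > 1/3" for k
  proof (induction k)
    case 0 then show ?case using h by simp
  next
    case (Suc k)
    have "X (h+k+2) z = X (h+k+1) z * (X (h+k+1) z + 2 * X (h+k) z)"
      using Xrec2[of "h+k" z] by (simp add: add.assoc)
    also have "\<dots> > 1/3 * 1"
      using Suc by (intro mult_strict_mono) auto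
    finally show ?case using Suc by (simp add: add.assoc)
  qed
  show ?thesis
  proof (intro allI impI)
    fix j assume "h \<le> j"
    then obtain k where "j = h + k" using le_Suc_ex by blast
    then show "X j z > 1/3" using D[of k] by auto
  qed
qed

lemma dichotomy:
  assumes z: "0 < z1" "z1 < z2" and nS: "\<not> Sp z1" and nT: "\<not> Tp z2"
  shows False
proof -
  define x where "x h = X h z1" for h
  define y where "y h = X h z2" for h
  have nS': "\<not> (x h < 1/3 \<and> x (Suc h) < 1/3)" for h using nS by (auto simp: Sp_def x_def)
  have nT': "\<not> (y h > 1/3 \<and> y (Suc h) > 1/3)" for h using nT by (auto simp: Tp_def y_def)
  have xpos: "0 < x h" for h using X_pos z by (auto simp: x_def)
  have xy: "x h \<le> y h" for h using X_mono[of z1 z2 h] z by (auto simp: x_def y_def)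
  have y1: "y h \<le> 1" for h
  proof (rule ccontr)
    assume "\<not> y h \<le> 1"
    then have "y h > 1" by simp
    then have "y h * y h > 1" by (metis less_1_mult)
    moreover have "(y h)^2 \<le> y (Suc h)" using X_sq[of z2 h] z by (auto simp: y_def)
    ultimately have "y (Suc h) > 1" by (simp add: power2_eq_square)
    then show False using nT'[of h] \<open>y h > 1\<close> by auto
  qed
  have x1: "x h \<le> 1" for h using xy[of h] y1[of h] by linarith
  define c where "c = min z1 (1/9)"
  have xc: "c \<le> x h" for h
  proof (cases h)
    case 0 then show ?thesis by (simp add: c_def x_def)
  next
    case (Suc k)
    show ?thesis
    proof (cases "x (Suc k) < 1/3")
      case False then show ?thesis using Suc by (simp add: c_def)
    next
      case True
      have a: "x k \<ge> 1/3" using nS'[of k] True by auto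
      have b: "x (Suc (Suc k)) \<ge> 1/3" using nS'[of "Suc k"] True by auto
      have "x (Suc (Suc k)) = x (Suc k) * (x (Suc k) + 2 * x k)" by (simp add: x_def)
      also have "\<dots> \<le> x (Suc k) * 3"
        using x1[of k] x1[of "Suc k"] xpos[of "Suc k"] by (intro mult_left_mono) auto
      finally have "x (Suc k) \<ge> 1/9" using b by linarith
      then show ?thesis using Suc by (simp add: c_def)
    qed
  qed
  define q where "q = z2 / z1"
  have q1: "q > 1" using z by (simp add: q_def)
  have yq: "y h \<ge> q^(h+1) * x h \<and> y (Suc h) \<ge> q^(h+2) * x (Suc h)" for h
  proof (induction h)
    case 0
    have "z2 = q * z1" using z by (simp add: q_def)
    then show ?case by (simp add: x_def y_def power2_eq_square)
  next
    case (Suc h)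
    have A: "y (Suc h) \<ge> q^(h+2) * x (Suc h)" "y h \<ge> q^(h+1) * x h" using Suc by auto
    have qp1: "q^(h+1) \<le> q^(h+2)" by (rule power_increasing) (use q1 in auto)
    have qp2: "1 \<le> q^(h+1)" using one_le_power[of q "h+1"] q1 by linarith
    have qp: "q^(h+1) \<le> q^(h+2)" "1 \<le> q^(h+1)" "0 \<le> q^(h+1)" using qp1 qp2 by auto
    have x0: "0 \<le> x h" "0 \<le> x (Suc h)" using xpos less_imp_le by auto
    have "y (Suc (Suc h)) = y (Suc h) * (y (Suc h) + 2 * y h)" by (simp add: y_def)
    also have "\<dots> \<ge> (q^(h+2) * x (Suc h)) * (q^(h+1) * (x (Suc h) + 2 * x h))"
    proof (rule mult_mono)
      have "q^(h+1) * x (Suc h) \<le> q^(h+2) * x (Suc h)" using qp x0 by (intro mult_right_mono) auto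
      then show "q^(h+1) * (x (Suc h) + 2 * x h) \<le> y (Suc h) + 2 * y h"
        using A by (simp add: distrib_left)
    qed (use A x0 qp xpos xy in \<open>auto intro: order_trans[OF _ xy]\<close>)
    also have "(q^(h+2) * x (Suc h)) * (q^(h+1) * (x (Suc h) + 2 * x h)) = (q^(h+2) * q^(h+1)) * x (Suc (Suc h))"
      by (simp add: x_def)
    also have "(q^(h+2) * q^(h+1)) * x (Suc (Suc h)) \<ge> q^(Suc h + 2) * x (Suc (Suc h))"
    proof (rule mult_right_mono)
      have "q^(Suc h + 2) = q^(h+2) * q" by simp
      also have "\<dots> \<le> q^(h+2) * q^(h+1)"
        using q1 by (intro mult_left_mono) (auto simp: power_increasing[of 1 "h+1" q, simplified])
      finally show "q^(Suc h + 2) \<le> q^(h+2) * q^(h+1)" .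
    qed (use xpos less_imp_le in auto)
    finally show ?case using A by simp
  qed
  have c0: "c > 0" using z by (simp add: c_def)
  obtain n where n: "1 / c < q ^ n" using real_arch_pow[OF q1] by blast
  have "q^(n+1) \<ge> q^n" using q1 by (simp add: power_increasing)
  then have "1 / c < q^(n+1)" using n by linarith
  then have "1 < q^(n+1) * c" using c0 by (simp add: field_simps)
  also have "\<dots> \<le> q^(n+1) * x n" using xc[of n] q1 by (intro mult_left_mono) auto
  also have "\<dots> \<le> y n" using yq[of n] by auto
  finally show False using y1[of n] by linarith
qed


lemma up2: "0 \<le> z \<Longrightarrow> X h z \<le> a \<Longrightarrow> X k z \<le> b \<Longrightarrow> k = Suc h \<Longrightarrow> m = Suc k \<Longrightarrow> b*(b+2*a) \<le> c \<Longrightarrow> X m z \<le> c"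
proof -
  assume A: "0 \<le> z" "X h z \<le> a" "X k z \<le> b" "k = Suc h" "m = Suc k" "b*(b+2*a) \<le> c"
  have b0: "0 \<le> b" using A(3) X_nonneg[OF A(1), of k] by linarith
  have "X m z = X k z * (X k z + 2 * X h z)" using A by simp
  also have "\<dots> \<le> b * (b + 2*a)" using A b0 X_nonneg[OF A(1)] by (intro mult_mono) auto
  finally show ?thesis using A by linarith
qed

lemma lo2: "0 \<le> z \<Longrightarrow> a \<le> X h z \<Longrightarrow> b \<le> X k z \<Longrightarrow> k = Suc h \<Longrightarrow> m = Suc k \<Longrightarrow> 0 \<le> a \<Longrightarrow> 0 \<le> b \<Longrightarrow> c \<le> b*(b+2*a) \<Longrightarrow> c \<le> X m z"
proof -
  assume A: "0 \<le> z" "a \<le> X h z" "b \<le> X k z" "k = Suc h" "m = Suc k" "0 \<le> a" "0 \<le> b" "c \<le> b*(b+2*a)"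
  have "X m z = X k z * (X k z + 2 * X h z)" using A by simp
  also have "\<dots> \<ge> b * (b + 2*a)" using A by (intro mult_mono) auto
  finally show ?thesis using A by linarith
qed

lemma S_num: "Sp 0.5219"
proof -
  define z :: real where "z = 0.5219"
  have z0: "0 \<le> z" by (simp add: z_def)
  have x0: "X 0 z \<le> 0.52190000000000" by (simp add: z_def)
  have x1: "X 1 z \<le> 0.27237961000000" by (simp add: z_def X1 power2_eq_square del: One_nat_def)
  have x2: "X 2 z \<le> 0.35850048886176" by (rule up2[OF z0 x0 x1]) simp_all
  have x3: "X 3 z \<le> 0.32381904719608" by (rule up2[OF z0 x1 x2]) simp_all
  have x4: "X 4 z \<le> 0.33703734877207" by (rule up2[OF z0 x2 x3]) simp_all
  have x5: "X 5 z \<le> 0.33187240076504" by (rule up2[OF z0 x3 x4]) simp_all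
  have x6: "X 6 z \<le> 0.33384607855850" by (rule up2[OF z0 x4 x5]) simp_all
  have x7: "X 7 z \<le> 0.33304180332330" by (rule up2[OF z0 x5 x6]) simp_all
  have x8: "X 8 z \<le> 0.33328624283191" by (rule up2[OF z0 x6 x7]) simp_all
  have "X 7 z < 1/3 \<and> X (Suc 7) z < 1/3" using x7 x8 by simp
  then show ?thesis unfolding Sp_def z_def by blast
qed

lemma T_num: "Tp 0.52191"
proof -
  define z :: real where "z = 0.52191"
  have z0: "0 \<le> z" by (simp add: z_def)
  have x0: "0.52191000000000 \<le> X 0 z" by (simp add: z_def)
  have x1: "0.27239004810000 \<le> X 1 z" by (simp add: z_def X1 power2_eq_square del: One_nat_def)
  have x2: "0.35852251831166 \<le> X 2 z" by (rule lo2[OF z0 x0 x1]) simp_all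
  have x3: "0.32385432815222 \<le> X 3 z" by (rule lo2[OF z0 x1 x2]) simp_all
  have x4: "0.33709976445345 \<le> X 4 z" by (rule lo2[OF z0 x2 x3]) simp_all
  have x5: "0.33197868666925 \<le> X 5 z" by (rule lo2[OF z0 x3 x4]) simp_all
  have x6: "0.33402972256217 \<le> X 6 z" by (rule lo2[OF z0 x4 x5]) simp_all
  have x7: "0.33335735276432 \<le> X 7 z" by (rule lo2[OF z0 x5 x6]) simp_all
  have "X 6 z > 1/3 \<and> X (Suc 6) z > 1/3" using x6 x7 by simp
  then show ?thesis unfolding Tp_def z_def by blast
qed



lemma pow_up: "0 \<le> (x::real) \<Longrightarrow> x \<le> a \<Longrightarrow> a^n \<le> b \<Longrightarrow> x^n \<le> b"
  using power_mono[of x a n] by linarith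
lemma pow_lo: "0 \<le> (a::real) \<Longrightarrow> a \<le> x \<Longrightarrow> b \<le> a^n \<Longrightarrow> b \<le> x^n"
  using power_mono[of a x n] by linarith

lemma num_up: assumes "0 \<le> (x::real)" "x \<le> 1.04382" shows "x^500 \<le> 2^31"
proof -
  have a1: "x^4 \<le> 1.18714141286273" by (rule pow_up[OF assms]) (simp add: power_divide)
  have a2: "(x^4)^5 \<le> 2.35782884826425" by (rule pow_up[OF _ a1]) (use assms in \<open>simp_all add: power_divide\<close>)
  have a3: "((x^4)^5)^5 \<le> 72.87211679899287" by (rule pow_up[OF _ a2]) (use assms in \<open>simp_all add: power_divide\<close>)
  have a4: "(((x^4)^5)^5)^5 \<le> 2^31" by (rule pow_up[OF _ a3]) (use assms in \<open>simp_all add: power_divide\<close>)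
  have "x^500 = (((x^4)^5)^5)^5" by (simp flip: power_mult)
  then show ?thesis using a4 by simp
qed

lemma num_lo: assumes "1.0438 \<le> (x::real)" shows "2^61 < x^1000"
proof -
  have a1: "1.40908872597477 \<le> x^8" by (rule pow_lo[OF _ assms]) (simp_all add: power_divide)
  have a2: "5.55509769106354 \<le> (x^8)^5" by (rule pow_lo[OF _ a1]) (simp_all add: power_divide)
  have a3: "5290.03449399499587 \<le> ((x^8)^5)^5" by (rule pow_lo[OF _ a2]) (simp_all add: power_divide)
  have a4: "5290.03449399499587^5 \<le> (((x^8)^5)^5)^5" by (rule pow_lo[OF _ a3]) (simp_all add: power_divide)
  have "x^1000 = (((x^8)^5)^5)^5" by (simp flip: power_mult)
  moreover have "(2::real)^61 < 5290.03449399499587^5" by (simp add: power_divide)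
  ultimately show ?thesis using a4 by simp
qed

lemma log_lower: assumes "0 < a" "(2*a)^500 \<le> (2::real)^31" shows "0.938 \<le> log 2 (1/a)"
proof -
  have "ln ((2*a)^500) \<le> ln ((2::real)^31)" by (rule ln_mono) (use assms in auto)
  moreover have "ln ((2*a)^500) = 500 * (ln 2 + ln a)" using assms by (subst ln_realpow) (auto simp: ln_mult)
  moreover have "ln ((2::real)^31) = 31 * ln 2" by (subst ln_realpow) auto
  ultimately have "500 * (ln 2 + ln a) \<le> 31 * ln 2" by simp
  then have "ln a \<le> - (469/500) * ln 2" by simp
  then have "469/500 \<le> - ln a / ln 2" by (simp add: field_simps)
  then show ?thesis using assms by (simp add: log_def ln_div)
qed

lemma log_upper: assumes "0 < a" "(2::real)^61 < (2*a)^1000" shows "log 2 (1/a) < 0.939"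
proof -
  have "ln ((2::real)^61) < ln ((2*a)^1000)" by (rule ln_strict_mono) (use assms in auto)
  moreover have "ln ((2*a)^1000) = 1000 * (ln 2 + ln a)" using assms by (subst ln_realpow) (auto simp: ln_mult)
  moreover have "ln ((2::real)^61) = 61 * ln 2" by (subst ln_realpow) auto
  ultimately have "61 * ln 2 < 1000 * (ln 2 + ln a)" by simp
  then have "- (939/1000) * ln 2 < ln a" by simp
  then have "- ln a / ln 2 < 939/1000" by (simp add: field_simps)
  then show ?thesis using assms by (simp add: log_def ln_div)
qed

lemma S_lt_T: assumes "0 < z" "Sp z" "0 < w" "Tp w" shows "z < w"
proof (rule ccontr)
  assume "\<not> z < w"
  then have wz: "w \<le> z" by simp
  obtain h0 where h0: "X h0 z < 1/3" "X (Suc h0) z < 1/3" using assms(2) by (auto simp: Sp_def)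
  obtain h1 where h1: "X h1 w > 1/3" "X (Suc h1) w > 1/3" using assms(4) by (auto simp: Tp_def)
  have "X (h0+h1) z < 1/3" using S_forward(1)[OF assms(1) h0] by simp
  moreover have "X (h0+h1) w > 1/3" using T_forward[OF assms(3) h1] by simp
  moreover have "X (h0+h1) w \<le> X (h0+h1) z" using X_mono[OF _ wz] assms by simp
  ultimately show False by simp
qed

lemma avl_a_bound:
  assumes s: "0 < s" "Sp s"
  shows "summable (\<lambda>h. coeff (avlA h) n)" "avl_a n * s^n \<le> (\<Sum>h. X h s)"
proof -
  obtain h0 where h0: "X h0 s < 1/3" "X (Suc h0) s < 1/3" using s by (auto simp: Sp_def)
  have sumX: "summable (\<lambda>h. X h s)" using S_forward(2)[OF s(1) h0] .
  have cle: "coeff (avlA h) n * s^n \<le> X h s" for h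
    by (rule coeff_le_poly) (use coeff_nonneg s in auto)
  have sn: "0 < s^n" using s by simp
  show sc: "summable (\<lambda>h. coeff (avlA h) n)"
  proof (rule summable_comparison_test)
    show "\<exists>N. \<forall>h\<ge>N. norm (coeff (avlA h) n) \<le> X h s / s^n"
      using cle sn coeff_nonneg by (auto simp: field_simps)
    show "summable (\<lambda>h. X h s / s^n)" using sumX by (rule summable_divide)
  qed
  have "avl_a n * s^n = (\<Sum>h. coeff (avlA h) n * s^n)"
    unfolding avl_a_def using sc by (rule suminf_mult2)
  also have "\<dots> \<le> (\<Sum>h. X h s)"
    by (rule suminf_le) (use cle sumX sc summable_mult2 in auto)
  finally show "avl_a n * s^n \<le> (\<Sum>h. X h s)" .
qed

lemma avl_a_pos: "1 \<le> n \<Longrightarrow> 0 < avl_a n"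
proof -
  assume n: "1 \<le> n"
  have sp: "Sp 0.5219" by (rule S_num)
  have sc: "summable (\<lambda>h. coeff (avlA h) n)" by (rule avl_a_bound(1)[OF _ sp]) simp
  obtain h where "0 < coeff (avlA h) n" using coeff_pos_ex[OF n] by blast
  then show ?thesis unfolding avl_a_def using sc coeff_nonneg by (intro suminf_pos2) auto
qed


lemma theta_part:
  assumes apos: "0 < \<alpha>" and approx: "\<And>e. e < \<alpha> \<Longrightarrow> \<exists>s. e < s \<and> 0 < s \<and> Sp s"
  shows "\<exists>\<theta>::nat \<Rightarrow> real.
          (\<forall>n\<ge>1. avl_a n > 0 \<and> \<theta> n > 0 \<and>
                   log 2 (avl_a n) = real n * log 2 (1 / \<alpha>) + ln (\<theta> n))
        \<and> (\<forall>\<kappa>::real. \<kappa> > 1 \<longrightarrow> \<theta> \<in> o(\<lambda>n. \<kappa> ^ n))"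
proof -
  define \<theta> where "\<theta> n = exp (log 2 (avl_a n) - real n * log 2 (1/\<alpha>))" for n
  have P1: "\<forall>n\<ge>1. avl_a n > 0 \<and> \<theta> n > 0 \<and> log 2 (avl_a n) = real n * log 2 (1 / \<alpha>) + ln (\<theta> n)"
    using avl_a_pos by (simp add: \<theta>_def)
  have P2: "\<theta> \<in> o(\<lambda>n. \<kappa>^n)" if k: "\<kappa> > 1" for \<kappa> :: real
  proof -
    define \<delta> where "\<delta> = ln \<kappa> / 2"
    have \<delta>: "\<delta> > 0" using k by (simp add: \<delta>_def)
    have l2: "ln (2::real) > 0" by simp
    have "exp (- (ln 2 * \<delta>)) < 1" using \<delta> l2 by simp
    then have "\<alpha> * exp (- (ln 2 * \<delta>)) < \<alpha>" using apos by simp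
    then obtain s where s: "\<alpha> * exp (- (ln 2 * \<delta>)) < s" "0 < s" "Sp s" using approx by blast
    define C where "C = (\<Sum>h. X h s)"
    have aC: "avl_a n * s^n \<le> C" for n using avl_a_bound(2)[OF s(2,3)] by (simp add: C_def)
    have "0 < avl_a 1 * s^1" using avl_a_pos[of 1] s(2) by simp
    then have C0: "0 < C" using aC[of 1] by linarith
    have "ln (\<alpha> * exp (- (ln 2 * \<delta>))) < ln s" by (rule ln_strict_mono) (use s apos in auto)
    then have ls: "ln \<alpha> - ln s < ln 2 * \<delta>" using apos by (simp add: ln_mult)
    define K where "K = exp (ln C / ln 2)"
    define e where "e = exp \<delta>"
    have e1: "e > 1" using \<delta> by (simp add: e_def)
    have K0: "K > 0" by (simp add: K_def)
    have "e * e = exp (\<delta> + \<delta>)" unfolding e_def by (rule exp_add[symmetric])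
    also have "\<delta> + \<delta> = ln \<kappa>" by (simp add: \<delta>_def)
    finally have ke: "\<kappa> = e * e" using k by simp
    have bound: "\<theta> n \<le> K * e^n" if n: "1 \<le> n" for n
    proof -
      have an: "0 < avl_a n" using avl_a_pos n by simp
      have "ln (avl_a n * s^n) \<le> ln C" by (rule ln_mono) (use aC an s in auto)
      then have lnb: "ln (avl_a n) + n * ln s \<le> ln C" using an s by (simp add: ln_mult ln_realpow)
      have "log 2 (1/\<alpha>) = - ln \<alpha> / ln 2" using apos by (simp add: log_def ln_div)
      moreover have "log 2 (avl_a n) = ln (avl_a n) / ln 2" by (simp add: log_def)
      ultimately have "\<theta> n = exp ((ln (avl_a n) + n * ln \<alpha>) / ln 2)"
        unfolding \<theta>_def by (simp add: add_divide_distrib)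
      also have "\<dots> \<le> exp (ln C / ln 2 + n * \<delta>)"
      proof -
        have "n * (ln \<alpha> - ln s) \<le> n * (ln 2 * \<delta>)" using ls by (intro mult_left_mono) auto
        then have "ln (avl_a n) + n * ln \<alpha> \<le> ln C + ln 2 * (n * \<delta>)" using lnb by (simp add: algebra_simps)
        then have "(ln (avl_a n) + n * ln \<alpha>) / ln 2 \<le> (ln C + ln 2 * (n * \<delta>)) / ln 2"
          using l2 by (intro divide_right_mono) auto
        also have "\<dots> = ln C / ln 2 + n * \<delta>" using l2 by (simp add: add_divide_distrib)
        finally show ?thesis by simp
      qed
      also have "\<dots> = K * e^n" by (simp add: K_def e_def exp_add exp_of_nat_mult)
      finally show ?thesis .
    qed
    show ?thesis
    proof (rule landau_o.smallI)
      fix c :: real assume c: "c > 0"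
      have "(\<lambda>n. (1/e)^n) \<longlonglongrightarrow> 0" using e1 by (intro LIMSEQ_power_zero) auto
      then have ev: "eventually (\<lambda>n. (1/e)^n < c / K) sequentially"
        using c K0 by (intro order_tendstoD(2)) auto
      show "eventually (\<lambda>n. norm (\<theta> n) \<le> c * norm (\<kappa>^n)) sequentially"
        using ev eventually_ge_at_top[of 1]
      proof eventually_elim
        case (elim n)
        have en: "0 < e^n" using e1 by simp
        have "K * (1/e)^n < K * (c / K)" using elim K0 by (intro mult_strict_left_mono) auto
        then have "K / e^n < c" using K0 by (simp add: power_one_over)
        then have "K < c * e^n" using en by (simp add: divide_less_eq)
        then have "K * e^n \<le> c * e^n * e^n" using en by (intro mult_right_mono) auto
        moreover have "\<theta> n \<le> K * e^n" using bound elim by simp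
        moreover have "\<theta> n > 0" by (simp add: \<theta>_def)
        moreover have "\<kappa>^n = e^n * e^n" using ke by (simp add: power_mult_distrib)
        ultimately show ?case using k by (simp add: mult.assoc)
      qed
    qed
  qed
  show ?thesis using P1 P2 by blast
qed

theorem theorem2:
  shows "\<exists>\<alpha>::real. avl_alpha \<longlonglongrightarrow> \<alpha>
     \<and> 0.5219 \<le> \<alpha> \<and> \<alpha> < 0.5220
     \<and> 0.938 \<le> log 2 (1 / \<alpha>) \<and> log 2 (1 / \<alpha>) < 0.939
     \<and> (\<exists>\<theta>::nat \<Rightarrow> real.
          (\<forall>n\<ge>1. avl_a n > 0 \<and> \<theta> n > 0 \<and>
                   log 2 (avl_a n) = real n * log 2 (1 / \<alpha>) + ln (\<theta> n))
        \<and> (\<forall>\<kappa>::real. \<kappa> > 1 \<longrightarrow> \<theta> \<in> o(\<lambda>n. \<kappa> ^ n)))"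
proof -
  define Sset where "Sset = {z. 0 < z \<and> Sp z}"
  define \<alpha> where "\<alpha> = Sup Sset"
  have Sin: "0.5219 \<in> Sset" using S_num by (simp add: Sset_def)
  have ne: "Sset \<noteq> {}" using Sin by auto
  have lt: "z < 0.52191" if "z \<in> Sset" for z
    using S_lt_T[OF _ _ _ T_num] that by (simp add: Sset_def)
  have bdd: "bdd_above Sset" using lt by (auto intro!: bdd_aboveI[of _ "0.52191"] less_imp_le)
  have alo: "0.5219 \<le> \<alpha>" unfolding \<alpha>_def by (rule cSup_upper[OF Sin bdd])
  have ahi: "\<alpha> \<le> 0.52191" unfolding \<alpha>_def by (rule cSup_least[OF ne]) (use lt less_imp_le in auto)
  have apos: "0 < \<alpha>" using alo by simp
  have approx: "\<exists>s. e < s \<and> 0 < s \<and> Sp s" if "e < \<alpha>" for e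
    using less_cSupD[OF ne, of e] that by (auto simp: \<alpha>_def Sset_def)
  have conv: "avl_alpha \<longlonglongrightarrow> \<alpha>"
  proof (rule LIMSEQ_I)
    fix r :: real assume r: "0 < r"
    obtain s where s: "\<alpha> - r < s" "0 < s" "Sp s" using approx[of "\<alpha> - r"] r by auto
    obtain h0 where h0: "X h0 s < 1/3" "X (Suc h0) s < 1/3" using s by (auto simp: Sp_def)
    have A: "s < avl_alpha j" if "h0 \<le> j" for j
      using below_alpha[of s j] S_forward(1)[OF s(2) h0] that s(2) by auto
    have "Tp (\<alpha> + r)"
    proof (rule ccontr)
      assume nT: "\<not> Tp (\<alpha> + r)"
      have nS: "\<not> Sp (\<alpha> + r/2)"
      proof
        assume "Sp (\<alpha> + r/2)"
        then have "\<alpha> + r/2 \<in> Sset" using apos r by (simp add: Sset_def)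
        then have "\<alpha> + r/2 \<le> \<alpha>" unfolding \<alpha>_def by (rule cSup_upper[OF _ bdd])
        then show False using r by simp
      qed
      show False by (rule dichotomy[OF _ _ nS nT]) (use apos r in auto)
    qed
    then obtain h1 where h1: "X h1 (\<alpha> + r) > 1/3" "X (Suc h1) (\<alpha> + r) > 1/3" by (auto simp: Tp_def)
    have B: "avl_alpha j < \<alpha> + r" if "h1 \<le> j" for j
      using above_alpha[of "\<alpha> + r" j] T_forward[OF _ h1] that apos r by auto
    show "\<exists>no. \<forall>n\<ge>no. norm (avl_alpha n - \<alpha>) < r"
    proof (intro exI allI impI)
      fix n assume "h0 + h1 \<le> n"
      then have "s < avl_alpha n" "avl_alpha n < \<alpha> + r" using A B by auto
      then show "norm (avl_alpha n - \<alpha>) < r" using s(1) by auto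
    qed
  qed
  have l1: "0.938 \<le> log 2 (1 / \<alpha>)"
    by (rule log_lower[OF apos num_up]) (use apos ahi in auto)
  have l2: "log 2 (1 / \<alpha>) < 0.939"
    by (rule log_upper[OF apos num_lo]) (use alo in auto)
  show ?thesis
    using conv alo ahi l1 l2 theta_part[OF apos approx] by (intro exI[of _ \<alpha>]) auto
qed

end
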